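(* Define polynomials $K_n(\lambda)$, $n\ge0$, by $K_0=2$, $K_1=1$, $K_2=\lambda-2$, $K_3=\lambda-3$, and for $p\ge2$, $K_{2p+1}=(\lambda-2)K_{2p-1}-K_{2p-3}$ and $K_{2p}=(\lambda-2)K_{2p-2}-K_{2p-4}$. Then for $n\ge3$, $K_n$ has degree $\lfloor n/2\rfloor$ and $$\mathcal{K}_n(\lambda)=\lambda^{\lfloor (n+1)/2\rfloor}K_n(\lambda).$$
   Context: $\mathcal{K}_n(\lambda)=\det(\lambda I_n-M_n)$ where $M_n$ is the $n\times n$ matrix with $(M_n)_{j,i}=1$ if $i\ge j-1$ or $(j,i)=(n,n-2)$, and $0$ otherwise. *)

theory Defs
  imports "Jordan_Normal_Form.Char_Poly"
begin

text \<open>The matrix M_n, with 0-based indices: entry (j,i) is 1 iff i+1 \<ge> j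
  (i.e. 1-based i \<ge> j-1) or (j,i) = (n-1,n-3) (i.e. 1-based (n,n-2)).\<close>
definition Mmat :: "nat \<Rightarrow> int mat" where
  "Mmat n = mat n n (\<lambda>(j,i). if j \<le> i + 1 \<or> (j = n - 1 \<and> i + 3 = n) then 1 else 0)"

text \<open>The polynomials K_n; for n \<ge> 4, K_n = (\<lambda>-2) K_(n-2) - K_(n-4),
  which covers both recurrences for p \<ge> 2.\<close>
fun Kpoly :: "nat \<Rightarrow> int poly" where
  "Kpoly 0 = [:2:]"
| "Kpoly (Suc 0) = [:1:]"
| "Kpoly (Suc (Suc 0)) = [:-2, 1:]"
| "Kpoly (Suc (Suc (Suc 0))) = [:-3, 1:]"
| "Kpoly (Suc (Suc (Suc (Suc n)))) = [:-2, 1:] * Kpoly (Suc (Suc n)) - Kpoly n"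

end

theory Submission
  imports Defs
begin

definition tri :: "nat \<Rightarrow> (nat \<Rightarrow> 'a) \<Rightarrow> 'a \<Rightarrow> 'a \<Rightarrow> 'a::comm_ring_1 mat" where
 "tri k a b c = mat k k (\<lambda>(i,j). if i = j then a i else if j = Suc i then b else if i = Suc j then c else 0)"

lemma tri_dim[simp]: "dim_row (tri k a b c) = k" "dim_col (tri k a b c) = k" unfolding tri_def by auto

lemma tri_carrier[simp]: "tri k a b c \<in> carrier_mat k k" unfolding tri_def by auto

lemma tri_rec: "det (tri (Suc (Suc k)) a b c) = a (Suc k) * det (tri (Suc k) a b c) - b * c * det (tri k a b c)"
proof -
  let ?T = "tri (Suc (Suc k)) a b c"
  have e: "det ?T = (\<Sum>j<Suc (Suc k). ?T $$ (Suc k,j) * cofactor ?T (Suc k) j)"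
    by (rule laplace_expansion_row[OF tri_carrier], simp)
  have z: "(\<Sum>j<k. ?T $$ (Suc k,j) * cofactor ?T (Suc k) j) = 0"
    by (rule sum.neutral, auto simp: tri_def)
  have d1: "mat_delete ?T (Suc k) (Suc k) = tri (Suc k) a b c"
    by (rule eq_matI, auto simp: mat_delete_def tri_def)
  define N where "N = mat_delete ?T (Suc k) k"
  have N: "N \<in> carrier_mat (Suc k) (Suc k)" unfolding N_def mat_delete_def by auto
  have eN: "det N = (\<Sum>i<Suc k. N $$ (i,k) * cofactor N i k)"
    by (rule laplace_expansion_column[OF N], simp)
  have zN: "(\<Sum>i<k. N $$ (i,k) * cofactor N i k) = 0"
    by (rule sum.neutral, auto simp: N_def mat_delete_def tri_def)
  have d2: "mat_delete N k k = tri k a b c"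
    by (rule eq_matI, auto simp: N_def mat_delete_def tri_def)
  have Nkk: "N $$ (k,k) = b" by (simp add: N_def mat_delete_def tri_def)
  have detN: "det N = b * det (tri k a b c)"
    using eN zN d2 Nkk by (simp add: cofactor_def)
  have Tk: "?T $$ (Suc k, k) = c" "?T $$ (Suc k, Suc k) = a (Suc k)" by (auto simp: tri_def)
  show ?thesis using e z d1 detN Tk
    by (simp add: cofactor_def N_def[symmetric] algebra_simps)
qed

definition Lm :: "nat \<Rightarrow> 'a::comm_ring_1 mat" where
  "Lm n = mat n n (\<lambda>(j,k). if k = j then 1 else if k = Suc j then -1 else 0)"

lemma Lm_carrier[simp]: "Lm n \<in> carrier_mat n n" "dim_row (Lm n) = n" "dim_col (Lm n) = n"
  unfolding Lm_def by auto

lemma det_Lm: "det (Lm n :: 'a::comm_ring_1 mat) = 1"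
proof -
  have "det (Lm n :: 'a mat) = prod_list (diag_mat (Lm n :: 'a mat))"
    by (rule det_upper_triangular[of _ n], auto simp: upper_triangular_def Lm_def)
  also have "diag_mat (Lm n :: 'a mat) = map (\<lambda>_. 1) [0..<n]"
    by (auto simp: diag_mat_def Lm_def)
  moreover have "prod_list (map (\<lambda>_. 1::'a) xs) = 1" for xs :: "nat list" by (induct xs) auto
  ultimately show ?thesis by simp
qed

lemma Lm_mult: assumes A: "A \<in> carrier_mat n n" and j: "j < n" and i: "i < n"
  shows "(Lm n * A) $$ (j,i) = A $$ (j,i) - (if Suc j < n then A $$ (Suc j, i) else 0)"
proof -
  have "(Lm n * A) $$ (j,i) = (\<Sum>k\<in>{0..<n}. Lm n $$ (j,k) * A $$ (k,i))"
    using A j i by (simp add: scalar_prod_def)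
  also have "\<dots> = (\<Sum>k\<in>{0..<n}. (if k = j then A $$ (j,i) else 0) + (if k = Suc j then - A $$ (Suc j,i) else 0))"
    by (rule sum.cong, auto simp: Lm_def j)
  also have "\<dots> = A $$ (j,i) - (if Suc j < n then A $$ (Suc j, i) else 0)"
    by (simp add: sum.distrib j)
  finally show ?thesis .
qed

lemma A_entry: assumes "j < n" "i < n"
  shows "char_poly_matrix (Mmat n) $$ (j,i) = (if j = i then [:0,1:] else 0) -
     (if j \<le> i + 1 \<or> (j = n - 1 \<and> i + 3 = n) then 1 else 0)"
  using assms by (auto simp: char_poly_matrix_def Mmat_def one_pCons)

lemma charpoly_tri:
  "char_poly (Mmat (Suc (Suc (Suc m)))) = [:0,1:] *
     det (tri (Suc (Suc m)) (\<lambda>i. if i = Suc m then [:0,1:] - 2 else [:0,1:]) (- [:0,1:]) (-1))"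
proof -
  define n where "n = Suc (Suc (Suc m))"
  define X :: "int poly" where "X = [:0,1:]"
  define A where "A = char_poly_matrix (Mmat n)"
  have A: "A \<in> carrier_mat n n" unfolding A_def char_poly_matrix_def Mmat_def by auto
  define Av where "Av = (\<lambda>j i. (if j = i then X else 0) -
     (if j \<le> i + 1 \<or> (j = n - 1 \<and> i + 3 = n) then 1 else (0::int poly)))"
  have Ae: "j < n \<Longrightarrow> i < n \<Longrightarrow> A $$ (j,i) = Av j i" for j i
    unfolding A_def Av_def X_def by (rule A_entry)
  define LA where "LA = Lm n * A"
  have LA: "LA \<in> carrier_mat n n" unfolding LA_def using A by auto
  define LAv where "LAv = (\<lambda>j i. Av j i - (if Suc j < n then Av (Suc j) i else 0))"
  have LAe: "j < n \<Longrightarrow> i < n \<Longrightarrow> LA $$ (j,i) = LAv j i" for j i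
    unfolding LA_def LAv_def using Lm_mult[OF A] Ae by simp
  define B where "B = addcol 1 (n-1) (n-2) LA"
  have B: "B \<in> carrier_mat n n" unfolding B_def using LA by auto
  have Be: "j < n \<Longrightarrow> i < n \<Longrightarrow> B $$ (j,i) = LAv j i + (if i = n - 1 then LAv j (n-2) else 0)" for j i
    unfolding B_def using LA LAe by (auto simp: n_def)
  have detB: "det B = det A"
  proof -
    have "det B = det LA" unfolding B_def by (rule det_addcol[OF _ _ LA], auto simp: n_def)
    also have "\<dots> = det A" unfolding LA_def by (simp add: det_mult[OF Lm_carrier(1) A] det_Lm)
    finally show ?thesis .
  qed
  have row: "j < n \<Longrightarrow> B $$ (Suc m, j) = (if j = Suc m then X else 0)" for j
    using Be[of "Suc m" j] by (auto simp: LAv_def Av_def n_def)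
  have "det B = (\<Sum>j<n. B $$ (Suc m, j) * cofactor B (Suc m) j)"
    by (rule laplace_expansion_row[OF B], simp add: n_def)
  also have "\<dots> = (\<Sum>j<n. if j = Suc m then X * cofactor B (Suc m) (Suc m) else 0)"
    by (rule sum.cong, auto simp: row)
  also have "\<dots> = X * det (mat_delete B (Suc m) (Suc m))"
    by (simp add: n_def cofactor_def)
  finally have 1: "det B = X * det (mat_delete B (Suc m) (Suc m))" .
  have 2: "mat_delete B (Suc m) (Suc m) = tri (Suc (Suc m)) (\<lambda>i. if i = Suc m then X - 2 else X) (- X) (-1)"
  proof (rule eq_matI)
    fix i j assume i: "i < dim_row (tri (Suc (Suc m)) (\<lambda>i. if i = Suc m then X - 2 else X) (- X) (-1))"
      and j: "j < dim_col (tri (Suc (Suc m)) (\<lambda>i. if i = Suc m then X - 2 else X) (- X) (-1))"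
    hence i: "i < Suc (Suc m)" and j: "j < Suc (Suc m)" by auto
    have "mat_delete B (Suc m) (Suc m) $$ (i,j) = B $$ (if i < Suc m then i else Suc i, if j < Suc m then j else Suc j)"
      using i j B by (simp add: mat_delete_def n_def)
    also have "\<dots> = tri (Suc (Suc m)) (\<lambda>i. if i = Suc m then X - 2 else X) (- X) (-1) $$ (i,j)"
      using i j by (subst Be, auto simp: n_def tri_def LAv_def Av_def algebra_simps)
    finally show "mat_delete B (Suc m) (Suc m) $$ (i,j) = tri (Suc (Suc m)) (\<lambda>i. if i = Suc m then X - 2 else X) (- X) (-1) $$ (i,j)" .
  qed (use B in \<open>auto simp: n_def\<close>)
  show ?thesis using 1 2 detB unfolding char_poly_def A_def X_def n_def by simp
qed

lemma tri_cong: "(\<And>i. i < k \<Longrightarrow> a i = a' i) \<Longrightarrow> tri k a b c = tri k a' b c"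
  by (rule eq_matI, auto simp: tri_def)

fun Dp :: "nat \<Rightarrow> int poly" where
  "Dp 0 = 1"
| "Dp (Suc 0) = [:0,1:]"
| "Dp (Suc (Suc k)) = [:0,1:] * Dp (Suc k) - [:0,1:] * Dp k"

lemma det_tri1: "det (tri (Suc 0) a b c) = a 0"
proof -
  have "det (tri (Suc 0) a b c) = (\<Sum>j<Suc 0. tri (Suc 0) a b c $$ (0,j) * cofactor (tri (Suc 0) a b c) 0 j)"
    by (rule laplace_expansion_row[OF tri_carrier], simp)
  also have "\<dots> = a 0" by (simp add: cofactor_def tri_def mat_delete_def)
  finally show ?thesis .
qed

lemma det_tri_D: "det (tri k (\<lambda>_. [:0,1:]) (- [:0,1:]) (-1)) = Dp k"
proof (induction k rule: Dp.induct)
  case 1 then show ?case by simp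
next
  case 2 then show ?case by (simp add: det_tri1)
next
  case (3 k) then show ?case by (simp add: tri_rec)
qed

lemma charpoly_D: "char_poly (Mmat (Suc (Suc (Suc m)))) =
   [:0,1:] * (([:0,1:] - 2) * Dp (Suc m) - [:0,1:] * Dp m)"
proof -
  let ?a = "\<lambda>i. if i = Suc m then [:0,1:] - 2 else [:0,1::int:]"
  have "det (tri (Suc (Suc m)) ?a (- [:0,1:]) (-1)) =
     ([:0,1:] - 2) * det (tri (Suc m) ?a (- [:0,1:]) (-1)) - (- [:0,1:]) * (-1) * det (tri m ?a (- [:0,1:]) (-1))"
    by (simp only: tri_rec if_True simp_thms)
  also have "tri (Suc m) ?a (- [:0,1:]) (-1) = tri (Suc m) (\<lambda>_. [:0,1:]) (- [:0,1:]) (-1)"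
    by (rule tri_cong, auto)
  also have "tri m ?a (- [:0,1:]) (-1) = tri m (\<lambda>_. [:0,1:]) (- [:0,1:]) (-1)"
    by (rule tri_cong, auto)
  also have "([:0,1:] - 2) * det (tri (Suc m) (\<lambda>_. [:0,1:]) (- [:0,1:]) (-1)) - (- [:0,1:]) * (-1) * det (tri m (\<lambda>_. [:0,1:]) (- [:0,1:]) (-1))
     = ([:0,1:] - 2) * Dp (Suc m) - (- [:0,1:]) * (-1) * Dp m"
    by (simp only: det_tri_D)
  finally have "det (tri (Suc (Suc m)) ?a (- [:0,1:]) (-1)) = ([:0,1:] - 2) * Dp (Suc m) - [:0,1:] * Dp m"
    by simp
  then show ?thesis by (simp only: charpoly_tri)
qed

fun Dg :: "'a::comm_ring_1 \<Rightarrow> nat \<Rightarrow> 'a" where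
  "Dg x 0 = 1"
| "Dg x (Suc 0) = x"
| "Dg x (Suc (Suc k)) = x * Dg x (Suc k) - x * Dg x k"

fun Kg :: "'a::comm_ring_1 \<Rightarrow> nat \<Rightarrow> 'a" where
  "Kg x 0 = 2"
| "Kg x (Suc 0) = 1"
| "Kg x (Suc (Suc 0)) = x - 2"
| "Kg x (Suc (Suc (Suc 0))) = x - 3"
| "Kg x (Suc (Suc (Suc (Suc n)))) = (x - 2) * Kg x (Suc (Suc n)) - Kg x n"

lemma Dg4: "Dg x (Suc (Suc (Suc (Suc k)))) = x * (x - 2) * Dg x (Suc (Suc k)) - x^2 * Dg x k"
proof -
  have "Dg x (Suc (Suc (Suc (Suc k)))) = x * (x * Dg x (Suc (Suc k)) - x * Dg x (Suc k)) - x * Dg x (Suc (Suc k))"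
    by simp
  also have "x * Dg x (Suc k) = Dg x (Suc (Suc k)) + x * Dg x k" by simp
  finally show ?thesis by (simp add: algebra_simps power2_eq_square)
qed

lemma main_g: "x * ((x - 2) * Dg x (Suc m) - x * Dg x m) = x ^ ((m + 4) div 2) * Kg x (m + 3)"
proof (induction m rule: less_induct)
  case (less m)
  show ?case
  proof (cases "m \<ge> 4")
    case True
    then obtain k where k: "m = Suc (Suc (Suc (Suc k)))" using le_Suc_ex by (metis add.commute add_Suc_shift numeral_Bit0 numeral_One one_add_one plus_1_eq_Suc)
    have IH1: "x * ((x - 2) * Dg x (Suc k) - x * Dg x k) = x ^ ((k + 4) div 2) * Kg x (k + 3)"
      using less k by simp
    have IH2: "x * ((x - 2) * Dg x (Suc (Suc (Suc k))) - x * Dg x (Suc (Suc k))) = x ^ ((k + 6) div 2) * Kg x (k + 5)"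
      using less[of "Suc (Suc k)"] k by (simp add: eval_nat_numeral)
    have "(k + 6) div 2 = Suc ((k + 4) div 2)" "(k + 8) div 2 = 2 + ((k + 4) div 2)" by presburger+
    then have m1: "x ^ ((k + 6) div 2) = x * x ^ ((k + 4) div 2)"
      and m2: "x ^ ((k + 8) div 2) = x^2 * x ^ ((k + 4) div 2)"
      by (simp_all only: power_Suc power_add)
    have K: "Kg x (k + 7) = (x - 2) * Kg x (k+5) - Kg x (k+3)"
      by (simp add: eval_nat_numeral)
    have "x ^ ((m + 4) div 2) * Kg x (m + 3) = x * (x - 2) * (x ^ ((k + 6) div 2) * Kg x (k + 5))
        - x^2 * (x ^ ((k + 4) div 2) * Kg x (k + 3))"
    proof -
      have "x ^ ((m + 4) div 2) * Kg x (m + 3) = x ^ ((k + 8) div 2) * Kg x (k + 7)"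
        using k by (simp add: eval_nat_numeral)
      also have "\<dots> = x * (x - 2) * (x ^ ((k + 6) div 2) * Kg x (k + 5))
        - x^2 * (x ^ ((k + 4) div 2) * Kg x (k + 3))"
        unfolding K m1 m2 by (simp add: algebra_simps power2_eq_square)
      finally show ?thesis .
    qed
    also have "\<dots> = x * ((x - 2) * Dg x (Suc m) - x * Dg x m)"
      unfolding IH1[symmetric] IH2[symmetric] k Dg4[of x "Suc k"] Dg4[of x k]
      by (simp add: algebra_simps power2_eq_square)
    finally show ?thesis by simp
  next
    case False
    have b0: "x * ((x - 2) * Dg x 1 - x * Dg x 0) = x^2 * Kg x 3"
      by (simp add: eval_nat_numeral algebra_simps)
    have b1: "x * ((x - 2) * Dg x 2 - x * Dg x 1) = x^2 * Kg x 4"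
      by (simp add: eval_nat_numeral algebra_simps)
    have b2: "x * ((x - 2) * Dg x 3 - x * Dg x 2) = x^3 * Kg x 5"
      by (simp add: eval_nat_numeral algebra_simps)
    have b3: "x * ((x - 2) * Dg x 4 - x * Dg x 3) = x^3 * Kg x 6"
      by (simp add: eval_nat_numeral algebra_simps)
    from False have "m = 0 \<or> m = 1 \<or> m = 2 \<or> m = 3" by auto
    then show ?thesis
    proof (elim disjE)
      assume m: "m = 0"
      have "Suc m = 1" "(m + 4) div 2 = 2" "m + 3 = 3" using m by simp_all
      then show ?thesis using b0 m by (simp only:)
    next
      assume m: "m = 1"
      have "Suc m = 2" "(m + 4) div 2 = 2" "m + 3 = 4" using m by simp_all
      then show ?thesis using b1 m by (simp only:)
    next
      assume m: "m = 2"
      have "Suc m = 3" "(m + 4) div 2 = 3" "m + 3 = 5" using m by simp_all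
      then show ?thesis using b2 m by (simp only:)
    next
      assume m: "m = 3"
      have "Suc m = 4" "(m + 4) div 2 = 3" "m + 3 = 6" using m by simp_all
      then show ?thesis using b3 m by (simp only:)
    qed
  qed
qed

lemma Dp_Dg: "Dp k = Dg [:0,1:] k"
  by (induction k rule: Dp.induct) auto

lemma polyconsts: "[:2:] = (2::int poly)" "[:-2, 1:] = [:0,1:] - (2::int poly)" "[:-3, 1:] = [:0,1:] - (3::int poly)"
  by (simp_all add: numeral_poly)

lemma Kpoly_Kg: "Kpoly k = Kg [:0,1:] k"
  by (induction k rule: Kpoly.induct) (auto simp: polyconsts one_pCons)

lemma degree_Kpoly: "degree (Kpoly n) = n div 2"
proof (induction n rule: Kpoly.induct)
  case (5 n)
  have p: "Kpoly (Suc (Suc n)) \<noteq> 0" using 5(1) by (intro notI) simp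
  have d1: "degree ([:-2, 1:] * Kpoly (Suc (Suc n))) = Suc (Suc (Suc n) div 2)"
    by (subst degree_mult_eq, use p in auto, simp add: 5(1))
  have "degree ([:-2, 1:] * Kpoly (Suc (Suc n)) - Kpoly n) = degree ([:-2, 1:] * Kpoly (Suc (Suc n)))"
    unfolding diff_conv_add_uminus
    by (rule degree_add_eq_left, unfold degree_minus d1 5(2), simp)
  then show ?case using d1 by simp
qed (auto simp: numeral_poly)

theorem proposition4:
  fixes n :: nat
  assumes "n \<ge> 3"
  shows "degree (Kpoly n) = n div 2 \<and>
         char_poly (Mmat n) = monom 1 ((n + 1) div 2) * Kpoly n"
proof
  show "degree (Kpoly n) = n div 2" by (rule degree_Kpoly)
  define m where "m = n - 3"
  have n: "n = Suc (Suc (Suc m))" using assms unfolding m_def by simp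
  show "char_poly (Mmat n) = monom 1 ((n + 1) div 2) * Kpoly n"
    unfolding n charpoly_D Dp_Dg Kpoly_Kg main_g monom_altdef
    by (simp add: eval_nat_numeral)
qed
end
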